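(* Let $E_B<0$, $\mu>0$, $\tau>-\mu$, and set $\tilde\tau:=\tau/|E_B|$. Then for all $L>0$, $$\Bigl|G_\mu(\tau)-\frac1{4\pi}\log(\tilde\mu+\tilde\tau)\Bigr|\le\frac{K(\tilde\tau,\tilde\mu,\tilde L)}{\tilde L},$$ where $$K(\tilde\tau,\tilde\mu,\tilde L):=1+\frac3{\tilde L}+\frac1{\sqrt{\tilde\mu+\min\{\tilde\tau,1\}}}+\Bigl(\frac{4\sqrt{\tilde\mu}}{\pi}+\frac6{\tilde L}\Bigr)\frac1{\tilde\mu+\min\{\tilde\tau,1\}}.$$
   Context: Let $L>0$ and $\Lambda_L:=\frac{2\pi}{L}\mathbb Z^2$; sums over $k$ run over $\Lambda_L$. Fix $E_B<0$ and $\mu>0$, and set $\tilde\mu:=\mu/|E_B|$, $\tilde L:=L\sqrt{|E_B|}$. For $\tau>-\mu$ let $G_\mu(\tau):=L^{-2}\sum_k\bigl(\frac{1}{k^2-E_B}-\frac{\chi_{(\mu,\infty)}(k^2)}{k^2+\tau}\bigr)$. *)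

theory Defs
  imports "HOL-Analysis.Analysis"
begin

text \<open>Squared length of the lattice vector k = (2 pi / L)(m,n) in the dual lattice Lambda_L.\<close>
definition lattice_sq :: "real \<Rightarrow> int \<times> int \<Rightarrow> real" where
  "lattice_sq L p = (2 * pi / L)^2 * (real_of_int (fst p)^2 + real_of_int (snd p)^2)"

definition G_mu :: "real \<Rightarrow> real \<Rightarrow> real \<Rightarrow> real \<Rightarrow> real" where
  "G_mu L E_B \<mu> \<tau> = (1 / L^2) *
     (\<Sum>\<^sub>\<infinity>p\<in>(UNIV :: (int \<times> int) set).
        1 / (lattice_sq L p - E_B) - (if \<mu> < lattice_sq L p then 1 / (lattice_sq L p + \<tau>) else 0))"

definition K_const :: "real \<Rightarrow> real \<Rightarrow> real \<Rightarrow> real" where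
  "K_const t m l = 1 + 3 / l + 1 / sqrt (m + min t 1)
     + (4 * sqrt m / pi + 6 / l) * (1 / (m + min t 1))"

end

theory Submission
  imports Defs "HOL-Real_Asymp.Real_Asymp"
begin

definition Ncnt :: "real \<Rightarrow> nat" where
  "Ncnt R = card {p::int\<times>int. real_of_int (fst p)^2 + real_of_int (snd p)^2 \<le> R}"

lemma int_sq_set:
  assumes "X \<ge> 0"
  shows "{n::int. real_of_int n ^ 2 \<le> X} = {-\<lfloor>sqrt X\<rfloor>..\<lfloor>sqrt X\<rfloor>}"
proof -
  have "real_of_int n ^ 2 \<le> X \<longleftrightarrow> \<bar>n\<bar> \<le> \<lfloor>sqrt X\<rfloor>" for n
  proof -
    have "real_of_int n ^ 2 \<le> X \<longleftrightarrow> \<bar>real_of_int n\<bar> \<le> sqrt X"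
    proof
      assume "real_of_int n ^ 2 \<le> X"
      then have "sqrt (real_of_int n ^ 2) \<le> sqrt X" by (rule real_sqrt_le_mono)
      then show "\<bar>real_of_int n\<bar> \<le> sqrt X" by simp
    next
      assume "\<bar>real_of_int n\<bar> \<le> sqrt X"
      then show "real_of_int n ^ 2 \<le> X" by (rule sqrt_ge_absD)
    qed
    also have "\<dots> \<longleftrightarrow> \<bar>n\<bar> \<le> \<lfloor>sqrt X\<rfloor>" by (simp only: le_floor_iff of_int_abs)
    finally show ?thesis .
  qed
  note * = this
  show ?thesis
  proof (rule set_eqI)
    fix n show "n \<in> {n::int. real_of_int n ^ 2 \<le> X} \<longleftrightarrow> n \<in> {-\<lfloor>sqrt X\<rfloor>..\<lfloor>sqrt X\<rfloor>}"
      using *[of n] by (simp only: mem_Collect_eq atLeastAtMost_iff) arith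
  qed
qed

lemma card_int_sq:
  assumes "X \<ge> 0"
  shows "real (card {n::int. real_of_int n ^ 2 \<le> X}) = 2 * real_of_int \<lfloor>sqrt X\<rfloor> + 1"
proof -
  have j: "\<lfloor>sqrt X\<rfloor> \<ge> 0" using assms by simp
  have "card {n::int. real_of_int n ^ 2 \<le> X} = nat (2*\<lfloor>sqrt X\<rfloor> + 1)"
    unfolding int_sq_set[OF assms] by simp
  thus ?thesis using j by simp
qed

lemma Ncnt_slices:
  assumes "R \<ge> 0"
  shows "real (Ncnt R) = (\<Sum>m\<in>{-\<lfloor>sqrt R\<rfloor>..\<lfloor>sqrt R\<rfloor>}. 2 * real_of_int \<lfloor>sqrt (R - real_of_int m ^ 2)\<rfloor> + 1)"
proof -
  let ?k = "\<lfloor>sqrt R\<rfloor>"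
  have eq: "{p::int\<times>int. real_of_int (fst p)^2 + real_of_int (snd p)^2 \<le> R}
      = Sigma {-?k..?k} (\<lambda>m. {n. real_of_int n ^ 2 \<le> R - real_of_int m ^ 2})"
  proof -
    have "real_of_int m ^ 2 + real_of_int n ^ 2 \<le> R \<Longrightarrow> m \<in> {-?k..?k}" for m n :: int
    proof -
      assume "real_of_int m ^ 2 + real_of_int n ^ 2 \<le> R"
      hence "real_of_int m ^ 2 \<le> R" using zero_le_power2[of "real_of_int n"] by linarith
      hence "m \<in> {n::int. real_of_int n ^ 2 \<le> R}" by simp
      thus ?thesis using int_sq_set[OF assms] by blast
    qed
    thus ?thesis by auto
  qed
  have fin: "finite {n::int. real_of_int n ^ 2 \<le> R - real_of_int m ^ 2}" if "m \<in> {-?k..?k}" for m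
  proof (cases "R - real_of_int m ^ 2 \<ge> 0")
    case True thus ?thesis unfolding int_sq_set[OF True] by simp
  next
    case False
    have "real_of_int n ^ 2 \<le> R - real_of_int m ^ 2 \<Longrightarrow> False" for n
      using False zero_le_power2[of "real_of_int n"] by linarith
    hence "{n::int. real_of_int n ^ 2 \<le> R - real_of_int m ^ 2} = {}" by auto
    thus ?thesis by simp
  qed
  have nn: "R - real_of_int m ^ 2 \<ge> 0" if "m \<in> {-?k..?k}" for m
  proof -
    have "m \<in> {n::int. real_of_int n ^ 2 \<le> R}" using that int_sq_set[OF assms] by blast
    thus ?thesis by simp
  qed
  have "real (Ncnt R) = real (\<Sum>m\<in>{-?k..?k}. card {n::int. real_of_int n ^ 2 \<le> R - real_of_int m ^ 2})"
    unfolding Ncnt_def eq by (subst card_SigmaI) (use fin in auto)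
  also have "\<dots> = (\<Sum>m\<in>{-?k..?k}. real (card {n::int. real_of_int n ^ 2 \<le> R - real_of_int m ^ 2}))"
    by simp
  also have "\<dots> = (\<Sum>m\<in>{-?k..?k}. 2 * real_of_int \<lfloor>sqrt (R - real_of_int m ^ 2)\<rfloor> + 1)"
    by (intro sum.cong refl, rule card_int_sq[OF nn])
  finally show ?thesis .
qed

lemma sum_sym:
  "(\<Sum>m\<in>{-int n..int n}. g m) = g 0 + (\<Sum>i\<in>{1..n}. g (int i) + g (- int i))"
proof (induction n)
  case 0 then show ?case by simp
next
  case (Suc n)
  have e: "{-int (Suc n)..int (Suc n)} = insert (int n + 1) (insert (-(int n + 1)) {-int n..int n})"
    by auto
  show ?case unfolding e using Suc by (simp add: algebra_simps)
qed

lemma quarter_disc: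
  fixes r :: real
  assumes "r > 0"
  shows "((\<lambda>x. sqrt (r^2 - x^2)) has_integral (pi * r^2 / 4)) {0..r}"
proof -
  define F where "F x = (x * sqrt (r^2 - x^2) + r^2 * arcsin (x / r)) / 2" for x
  have cont: "continuous_on {0..r} F"
    unfolding F_def using assms
    by (intro continuous_intros; auto simp: divide_simps)
  have der: "(F has_vector_derivative sqrt (r^2 - x^2)) (at x)" if x: "x \<in> {0<..<r}" for x
  proof -
    let ?s = "sqrt (r^2 - x^2)"
    have pos: "r^2 - x^2 > 0" using x assms
      by (simp add: power_strict_mono)
    have spos: "?s > 0" using pos by simp
    have inner: "((\<lambda>y. r^2 - y^2) has_real_derivative (- (2*x))) (at x)"
      by (auto intro!: derivative_eq_intros)
    have ds: "((\<lambda>y. sqrt (r^2 - y^2)) has_real_derivative (inverse ?s / 2 * (- (2*x)))) (at x)"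
      using DERIV_chain2[OF DERIV_real_sqrt[OF pos] inner] by simp
    have xr: "-1 < x / r" "x / r < 1" using x assms by (auto simp: divide_simps)
    have da: "((\<lambda>y. arcsin (y / r)) has_real_derivative (inverse (sqrt (1 - (x/r)^2)) * (1 / r))) (at x)"
    proof -
      have dg: "((\<lambda>y. y / r) has_real_derivative 1 / r) (at x)"
        using assms by (auto intro!: derivative_eq_intros)
      show ?thesis
        using DERIV_chain2[where f=arcsin and g="\<lambda>y. y / r" and x=x, OF _ dg] DERIV_arcsin[OF xr]
        by simp
    qed
    have e1: "sqrt (1 - (x/r)^2) = ?s / r"
    proof -
      have "1 - (x/r)^2 = (r^2 - x^2) / r^2" using assms by (simp add: field_simps)
      thus ?thesis using assms by (simp add: real_sqrt_divide)
    qed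
    have dF: "(F has_real_derivative ((1 * ?s + (inverse ?s / 2 * (- (2*x))) * x + r^2 * (inverse (sqrt (1 - (x/r)^2)) * (1 / r))) / 2)) (at x)"
      unfolding F_def
      by (rule DERIV_cdivide[OF DERIV_add[OF DERIV_mult[OF DERIV_ident ds] DERIV_cmult[OF da]]])
    have ss: "?s * ?s = r^2 - x^2" using pos by (simp add: real_sqrt_mult_self)
    have a1: "inverse (?s / r) * (1/r) = 1 / ?s" using assms spos by (simp add: field_simps)
    have a2: "(inverse ?s / 2 * (- (2*x))) * x = - (x*x) / ?s" using spos by (simp add: field_simps)
    have a5: "(r^2 - x^2) / ?s = ?s"
    proof -
      have "(r^2 - x^2) / ?s = (?s * ?s) / ?s" using ss by simp
      also have "\<dots> = ?s" by (rule nonzero_mult_div_cancel_right) (use spos in simp)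
      finally show ?thesis .
    qed
    have a3: "r^2 * (1 / ?s) = ?s + x * x / ?s"
    proof -
      have "r^2 * (1 / ?s) = (r^2 - x^2 + x*x) / ?s" by (simp add: power2_eq_square)
      also have "\<dots> = (r^2 - x^2) / ?s + x*x / ?s" by (rule add_divide_distrib)
      finally show ?thesis using a5 by simp
    qed
    have eqn: "((1 * ?s + (inverse ?s / 2 * (- (2*x))) * x + r^2 * (inverse (sqrt (1 - (x/r)^2)) * (1 / r))) / 2)
        = ?s"
      unfolding e1 a1 a2 a3 by simp
    from dF have "(F has_real_derivative ?s) (at x)" unfolding eqn .
    thus ?thesis by (simp add: has_real_derivative_iff_has_vector_derivative)
  qed
  have "((\<lambda>x. sqrt (r^2 - x^2)) has_integral (F r - F 0)) {0..r}"
    by (rule fundamental_theorem_of_calculus_interior; use assms cont der in auto)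
  moreover have "F r - F 0 = pi * r^2 / 4" unfolding F_def using assms by simp
  ultimately show ?thesis by simp
qed

lemma dec_int_bounds:
  fixes h :: "real \<Rightarrow> real"
  assumes ab: "a \<le> b" and c: "continuous_on {a..b} h"
    and m: "\<And>x. x \<in> {a..b} \<Longrightarrow> h b \<le> h x \<and> h x \<le> h a"
  shows "(b - a) * h b \<le> integral {a..b} h \<and> integral {a..b} h \<le> (b - a) * h a"
proof -
  have i: "h integrable_on {a..b}" using c by (rule integrable_continuous_interval)
  have "integral {a..b} (\<lambda>_. h b) \<le> integral {a..b} h"
    by (rule integral_le) (use i m in auto)
  moreover have "integral {a..b} h \<le> integral {a..b} (\<lambda>_. h a)"
    by (rule integral_le) (use i m in auto)
  ultimately show ?thesis using ab by (simp add: mult.commute)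
qed

lemma lin_aux:
  fixes N r S1 k P :: real
  assumes "N - 2*(r+2*S1) \<le> 2*k+1" "-(N - 2*(r+2*S1)) \<le> 2*k+1" "S1 \<le> P/4" "P/4 \<le> r + S1" "k \<le> r"
  shows "\<bar>N - P\<bar> \<le> 4*r+1"
proof -
  have "N \<le> 2*r + 4*S1 + 2*k + 1" "2*r + 4*S1 - 2*k - 1 \<le> N" "4*S1 \<le> P" "P \<le> 4*r + 4*S1"
    using assms by (simp_all add: algebra_simps)
  hence "N - P \<le> 4*r+1" "P - N \<le> 4*r+1" using assms(5) by linarith+
  thus ?thesis by linarith
qed

lemma lattice_bound:
  assumes R: "R \<ge> 0"
  shows "\<bar>real (Ncnt R) - pi * R\<bar> \<le> 4 * sqrt R + 1"
proof -
  define r where "r = sqrt R"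
  define hh where "hh x = sqrt (R - x^2)" for x :: real
  define k where "k = nat \<lfloor>r\<rfloor>"
  have r0: "r \<ge> 0" unfolding r_def using R by simp
  have rR: "r^2 = R" unfolding r_def using R by simp
  have kfl: "\<lfloor>sqrt R\<rfloor> = int k" unfolding k_def r_def using R by simp
  have kr: "real k \<le> r" unfolding k_def using r0 by linarith
  have rk: "r < real k + 1" unfolding k_def using r0 by linarith
  have cont: "continuous_on {0..r} hh" unfolding hh_def by (intro continuous_intros)
  have hh_mono: "hh y \<le> hh x" if "0 \<le> x" "x \<le> y" for x y
  proof -
    have "x^2 \<le> y^2" using that by (simp add: power_mono)
    thus ?thesis unfolding hh_def by simp
  qed
  have hh0: "hh 0 = r" unfolding hh_def r_def by simp
  have hh_nn: "hh x \<ge> 0" if "\<bar>x\<bar> \<le> r" for x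
  proof -
    have "\<bar>x\<bar>^2 \<le> r^2" using that by (intro power_mono) auto
    hence "x^2 \<le> r^2" by simp
    thus ?thesis unfolding hh_def using rR by simp
  qed
  have hh_even: "hh (- x) = hh x" for x unfolding hh_def by simp
  have A: "integral {0..r} hh = pi * R / 4"
  proof (cases "r = 0")
    case True thus ?thesis using rR by simp
  next
    case False
    hence "r > 0" using r0 by simp
    from quarter_disc[OF this] show ?thesis unfolding hh_def rR by (simp add: integral_unique)
  qed
  have intg: "hh integrable_on {a..b}" if "0 \<le> a" "b \<le> r" for a b
  proof (cases "a \<le> b")
    case True
    have "continuous_on {a..b} hh" using cont by (rule continuous_on_subset) (use that in auto)
    thus ?thesis by (rule integrable_continuous_interval)
  next
    case False thus ?thesis by (simp add: integrable_on_empty)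
  qed
  have steps: "(\<Sum>i\<in>{1..n}. hh (real i)) \<le> integral {0..real n} hh
     \<and> integral {0..real n} hh \<le> (\<Sum>i<n. hh (real i))" if "real n \<le> r" for n
    using that
  proof (induction n)
    case 0 thus ?case by simp
  next
    case (Suc n)
    have nr: "real n \<le> r" using Suc.prems by simp
    note IH = Suc.IH[OF nr]
    have comb: "integral {0..real (Suc n)} hh = integral {0..real n} hh + integral {real n..real (Suc n)} hh"
      by (rule Henstock_Kurzweil_Integration.integral_combine[symmetric]) (use intg Suc.prems in auto)
    have b: "(real (Suc n) - real n) * hh (real (Suc n)) \<le> integral {real n..real (Suc n)} hh
        \<and> integral {real n..real (Suc n)} hh \<le> (real (Suc n) - real n) * hh (real n)"
      by (rule dec_int_bounds) (use Suc.prems hh_mono in \<open>auto intro: continuous_on_subset[OF cont]\<close>)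
    show ?case using IH b unfolding comb by simp
  qed
  have I_split: "integral {0..r} hh = integral {0..real k} hh + integral {real k..r} hh"
    by (rule Henstock_Kurzweil_Integration.integral_combine[symmetric]) (use intg kr in auto)
  have tail: "0 \<le> integral {real k..r} hh \<and> integral {real k..r} hh \<le> hh (real k)"
  proof -
    have "(r - real k) * hh r \<le> integral {real k..r} hh \<and> integral {real k..r} hh \<le> (r - real k) * hh (real k)"
      by (rule dec_int_bounds) (use kr hh_mono in \<open>auto intro: continuous_on_subset[OF cont]\<close>)
    moreover have "hh r \<ge> 0" "hh (real k) \<ge> 0" using kr r0 hh_nn by auto
    moreover have "(r - real k) * hh (real k) \<le> 1 * hh (real k)"
      using rk kr \<open>hh (real k) \<ge> 0\<close> by (intro mult_right_mono) auto
    moreover have "(r - real k) * hh r \<ge> 0" using kr \<open>hh r \<ge> 0\<close> by simp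
    ultimately show ?thesis by linarith
  qed
  define S1 where "S1 = (\<Sum>i\<in>{1..k}. hh (real i))"
  have S1_le: "S1 \<le> pi * R / 4" using steps[OF kr] tail I_split A unfolding S1_def by linarith
  have sum_lt: "(\<Sum>i<k. hh (real i)) + hh (real k) = r + S1"
  proof -
    have "(\<Sum>i<k. hh (real i)) + hh (real k) = (\<Sum>i\<le>k. hh (real i))"
      by (simp add: lessThan_Suc_atMost[symmetric])
    also have "\<dots> = hh 0 + S1" unfolding S1_def
      by (simp add: atMost_atLeast0 sum.atLeast_Suc_atMost[of 0 k])
    finally show ?thesis using hh0 by simp
  qed
  have S1_ge: "pi * R / 4 \<le> r + S1" using steps[OF kr] tail I_split A sum_lt by linarith
  have symsum: "(\<Sum>m\<in>{-int k..int k}. hh (real_of_int m)) = r + 2 * S1"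
    unfolding sum_sym S1_def using hh0 hh_even by (simp add: sum_distrib_left)
  have N: "real (Ncnt R) = (\<Sum>m\<in>{-int k..int k}. 2 * real_of_int \<lfloor>hh (real_of_int m)\<rfloor> + 1)"
    using Ncnt_slices[OF R] unfolding kfl hh_def .
  have "\<bar>real (Ncnt R) - 2 * (\<Sum>m\<in>{-int k..int k}. hh (real_of_int m))\<bar>
      = \<bar>\<Sum>m\<in>{-int k..int k}. (2 * real_of_int \<lfloor>hh (real_of_int m)\<rfloor> + 1 - 2 * hh (real_of_int m))\<bar>"
    unfolding N by (simp add: sum_subtractf sum_distrib_left)
  also have "\<dots> \<le> (\<Sum>m\<in>{-int k..int k}. \<bar>2 * real_of_int \<lfloor>hh (real_of_int m)\<rfloor> + 1 - 2 * hh (real_of_int m)\<bar>)"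
    by (rule sum_abs)
  also have "\<dots> \<le> (\<Sum>m\<in>{-int k..int k}. 1)"
  proof (rule sum_mono)
    fix m
    have "real_of_int \<lfloor>hh (real_of_int m)\<rfloor> \<le> hh (real_of_int m)" by (rule of_int_floor_le)
    moreover have "hh (real_of_int m) < real_of_int \<lfloor>hh (real_of_int m)\<rfloor> + 1" by (rule real_of_int_floor_add_one_gt)
    ultimately show "\<bar>2 * real_of_int \<lfloor>hh (real_of_int m)\<rfloor> + 1 - 2 * hh (real_of_int m)\<bar> \<le> 1" by linarith
  qed
  also have "\<dots> = 2 * real k + 1" by simp
  finally have D: "\<bar>real (Ncnt R) - 2 * (r + 2 * S1)\<bar> \<le> 2 * real k + 1" unfolding symsum .
  have "r = sqrt R" unfolding r_def ..
  moreover have D1: "real (Ncnt R) - 2 * (r + 2 * S1) \<le> 2 * real k + 1"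
    and D2: "- (real (Ncnt R) - 2 * (r + 2 * S1)) \<le> 2 * real k + 1" using D by (simp_all only: abs_le_iff)
  ultimately show ?thesis using lin_aux[OF D1 D2 S1_le S1_ge kr] by simp
qed

lemma abel_sum:
  fixes v :: "'a \<Rightarrow> real" and H h :: "real \<Rightarrow> real"
  assumes fin: "finite P" and rng: "\<And>p. p \<in> P \<Longrightarrow> a \<le> v p \<and> v p \<le> b"
    and der: "\<And>s. s \<in> {a..b} \<Longrightarrow> (H has_real_derivative h s) (at s)"
  shows "((\<lambda>s. real (card {p\<in>P. v p \<le> s}) * h s) has_integral
           (real (card P) * H b - (\<Sum>p\<in>P. H (v p)))) {a..b}"
proof -
  have each: "((\<lambda>s. if s \<in> cbox (v p) b then h s else 0) has_integral (H b - H (v p))) (cbox a b)"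
    if p: "p \<in> P" for p
  proof (rule has_integral_restrict_closed_subinterval)
    have dv: "(H has_vector_derivative h x) (at x within {v p..b})" if x: "x \<in> {v p..b}" for x
    proof -
      have "(H has_real_derivative h x) (at x)" using der rng[OF p] x by auto
      hence "(H has_vector_derivative h x) (at x)"
        by (simp add: has_real_derivative_iff_has_vector_derivative)
      thus ?thesis by (rule has_vector_derivative_at_within)
    qed
    have "(h has_integral H b - H (v p)) {v p..b}"
      by (rule fundamental_theorem_of_calculus) (use rng[OF p] dv in auto)
    thus "(h has_integral H b - H (v p)) (cbox (v p) b)" by simp
    show "cbox (v p) b \<subseteq> cbox a b" using rng[OF p] by auto
  qed
  have AA: "((\<lambda>s. \<Sum>p\<in>P. if s \<in> cbox (v p) b then h s else 0) has_integral (\<Sum>p\<in>P. H b - H (v p))) (cbox a b)"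
    by (rule has_integral_sum[OF fin]) (rule each)
  have eqpt: "(\<Sum>p\<in>P. if s \<in> cbox (v p) b then h s else 0) = real (card {p\<in>P. v p \<le> s}) * h s"
    if s: "s \<in> cbox a b" for s
  proof -
    have "(\<Sum>p\<in>P. if s \<in> cbox (v p) b then h s else 0) = (\<Sum>p\<in>P. if v p \<le> s then h s else 0)"
      using s by (intro sum.cong refl) auto
    also have "\<dots> = (\<Sum>p\<in>{p\<in>P. v p \<le> s}. h s)"
      using sum.inter_filter[OF fin, of "\<lambda>_. h s" "\<lambda>p. v p \<le> s"] by simp
    finally show ?thesis by simp
  qed
  have "((\<lambda>s. real (card {p\<in>P. v p \<le> s}) * h s) has_integral (\<Sum>p\<in>P. H b - H (v p))) (cbox a b)"
  proof -
    have "((\<lambda>s. \<Sum>p\<in>P. if s \<in> cbox (v p) b then h s else 0) has_integral (\<Sum>p\<in>P. H b - H (v p))) (cbox a b)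
        = ((\<lambda>s. real (card {p\<in>P. v p \<le> s}) * h s) has_integral (\<Sum>p\<in>P. H b - H (v p))) (cbox a b)"
      by (rule has_integral_cong) (rule eqpt)
    from iffD1[OF this AA] show ?thesis .
  qed
  moreover have "(\<Sum>p\<in>P. H b - H (v p)) = real (card P) * H b - (\<Sum>p\<in>P. H (v p))"
    by (simp add: sum_subtractf)
  ultimately show ?thesis by simp
qed

definition Gf :: "real \<Rightarrow> real \<Rightarrow> real \<Rightarrow> real \<Rightarrow> real \<Rightarrow> real" where
  "Gf \<alpha> \<gamma> \<mu> c s = \<alpha> * (arctan (sqrt ((s - \<mu>) / c)) / sqrt c - sqrt (s - \<mu>) / (s - \<mu> + c)) - \<gamma> / (s - \<mu> + c)"

lemma Gf_deriv:
  fixes \<alpha> \<gamma> \<mu> c s :: real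
  assumes c: "c > 0" and s: "s > \<mu>"
  shows "(Gf \<alpha> \<gamma> \<mu> c has_real_derivative (\<alpha> * sqrt (s - \<mu>) + \<gamma>) / (s - \<mu> + c)^2) (at s)"
proof -
  define t where "t = s - \<mu>"
  have t: "t > 0" unfolding t_def using s by simp
  define a where "a = sqrt t"
  define b where "b = sqrt c"
  have a: "a > 0" unfolding a_def using t by simp
  have b: "b > 0" unfolding b_def using c by simp
  have aa: "a * a = t" unfolding a_def using t by simp
  have bb: "b * b = c" unfolding b_def using c by simp
  have w: "(s - \<mu>) / c > 0" using s c by simp
  have dw: "((\<lambda>y. (y - \<mu>) / c) has_real_derivative 1 / c) (at s)"
    using c by (auto intro!: derivative_eq_intros)
  have dq: "((\<lambda>y. sqrt ((y - \<mu>) / c)) has_real_derivative (inverse (sqrt ((s - \<mu>) / c)) / 2 * (1 / c))) (at s)"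
    using DERIV_chain2[where f=sqrt and g="\<lambda>y. (y - \<mu>) / c", OF DERIV_real_sqrt[OF w] dw] by simp
  have dat: "((\<lambda>y. arctan (sqrt ((y - \<mu>) / c))) has_real_derivative
       (inverse (1 + (sqrt ((s - \<mu>) / c))^2) * (inverse (sqrt ((s - \<mu>) / c)) / 2 * (1 / c)))) (at s)"
    using DERIV_chain2[where f=arctan and g="\<lambda>y. sqrt ((y - \<mu>) / c)", OF DERIV_arctan dq] by simp
  have tpos: "s - \<mu> > 0" using s by simp
  have dst: "((\<lambda>y. y - \<mu>) has_real_derivative 1) (at s)" by (auto intro!: derivative_eq_intros)
  have ds: "((\<lambda>y. sqrt (y - \<mu>)) has_real_derivative (inverse (sqrt (s - \<mu>)) / 2 * 1)) (at s)"
    using DERIV_chain2[where f=sqrt and g="\<lambda>y. y - \<mu>", OF DERIV_real_sqrt[OF tpos] dst] by simp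
  have dden: "((\<lambda>y. y - \<mu> + c) has_real_derivative 1) (at s)" by (auto intro!: derivative_eq_intros)
  have den: "s - \<mu> + c \<noteq> 0" using s c by simp
  have dfrac: "((\<lambda>y. sqrt (y - \<mu>) / (y - \<mu> + c)) has_real_derivative
      ((inverse (sqrt (s - \<mu>)) / 2 * 1) * (s - \<mu> + c) - sqrt (s - \<mu>) * 1) / ((s - \<mu> + c) * (s - \<mu> + c))) (at s)"
    by (rule DERIV_divide[OF ds dden den])
  have dinv: "((\<lambda>y. \<gamma> / (y - \<mu> + c)) has_real_derivative
      (0 * (s - \<mu> + c) - \<gamma> * 1) / ((s - \<mu> + c) * (s - \<mu> + c))) (at s)"
    by (rule DERIV_divide[OF DERIV_const dden den])
  have dG: "(Gf \<alpha> \<gamma> \<mu> c has_real_derivative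
      \<alpha> * ((inverse (1 + (sqrt ((s - \<mu>) / c))^2) * (inverse (sqrt ((s - \<mu>) / c)) / 2 * (1 / c))) / sqrt c
        - ((inverse (sqrt (s - \<mu>)) / 2 * 1) * (s - \<mu> + c) - sqrt (s - \<mu>) * 1) / ((s - \<mu> + c) * (s - \<mu> + c)))
      - (0 * (s - \<mu> + c) - \<gamma> * 1) / ((s - \<mu> + c) * (s - \<mu> + c))) (at s)"
    unfolding Gf_def[abs_def]
    by (rule DERIV_diff[OF DERIV_cmult[OF DERIV_diff[OF DERIV_cdivide[OF dat] dfrac]] dinv])
  have e1: "sqrt ((s - \<mu>) / c) = a / b" unfolding a_def b_def t_def by (simp add: real_sqrt_divide)
  have e2: "sqrt (s - \<mu>) = a" unfolding a_def t_def ..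
  have e3: "s - \<mu> + c = a * a + b * b" using aa bb unfolding t_def by simp
  have e4: "sqrt c = b" unfolding b_def ..
  have e5: "1 / c = 1 / (b * b)" using bb by simp
  define Q where "Q = a * a + b * b"
  have Q: "Q > 0" unfolding Q_def using a by (simp add: add_pos_nonneg)
  have h1: "inverse (1 + (a / b)^2) * (inverse (a / b) / 2 * (1 / (b * b))) / b = 1 / (2 * a * Q)"
  proof -
    have "1 + (a / b)^2 = Q / (b * b)" unfolding Q_def using b by (simp add: field_simps power2_eq_square)
    hence i1: "inverse (1 + (a / b)^2) = (b * b) / Q" by simp
    have i2: "inverse (a / b) = b / a" by simp
    have "inverse (1 + (a / b)^2) * (inverse (a / b) / 2 * (1 / (b * b))) / b
        = (b * b) / Q * (b / a / 2 * (1 / (b * b))) / b" by (simp only: i1 i2)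
    also have "\<dots> = 1 / (2 * a * Q)" using a b Q by (simp add: field_simps)
    finally show ?thesis .
  qed
  have h2: "((inverse a / 2 * 1) * Q - a * 1) / (Q * Q) = (Q - 2 * (a * a)) / (2 * a * (Q * Q))"
    using a Q by (simp add: field_simps)
  have h3: "1 / (2 * a * Q) - (Q - 2 * (a * a)) / (2 * a * (Q * Q)) = a / (Q * Q)"
    using a Q by (simp add: field_simps)
  have eq: "\<alpha> * (1 / (2 * a * Q) - (Q - 2 * (a * a)) / (2 * a * (Q * Q))) - (0 * Q - \<gamma> * 1) / (Q * Q)
      = (\<alpha> * a + \<gamma>) / Q^2"
    unfolding h3 by (simp add: power2_eq_square add_divide_distrib)
  have e3': "s - \<mu> + c = Q" unfolding Q_def using e3 .
  show ?thesis using dG unfolding e1 e2 e3' e4 e5 h1 h2 eq .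
qed

lemma Gf_int:
  assumes mR: "\<mu> \<le> R" and c: "c > 0"
  shows "((\<lambda>s. (\<alpha> * sqrt (s - \<mu>) + \<gamma>) / (s - \<mu> + c)^2) has_integral (Gf \<alpha> \<gamma> \<mu> c R - Gf \<alpha> \<gamma> \<mu> c \<mu>)) {\<mu>..R}"
proof (rule fundamental_theorem_of_calculus_interior[OF mR])
  show "continuous_on {\<mu>..R} (Gf \<alpha> \<gamma> \<mu> c)"
    unfolding Gf_def[abs_def] using c
    by (intro continuous_intros) (auto simp: add_nonneg_pos)
  fix x assume "x \<in> {\<mu><..<R}"
  hence "x > \<mu>" by simp
  from Gf_deriv[OF c this, of \<alpha> \<gamma>]
  show "(Gf \<alpha> \<gamma> \<mu> c has_vector_derivative (\<alpha> * sqrt (x - \<mu>) + \<gamma>) / (x - \<mu> + c)^2) (at x)"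
    by (simp add: has_real_derivative_iff_has_vector_derivative)
qed

lemma Gf_bound:
  assumes mR: "\<mu> \<le> R" and c: "c > 0" and a: "\<alpha> \<ge> 0" and g: "\<gamma> \<ge> 0"
  shows "Gf \<alpha> \<gamma> \<mu> c R - Gf \<alpha> \<gamma> \<mu> c \<mu> \<le> \<alpha> * pi / (2 * sqrt c) + \<gamma> / c"
proof -
  have G0: "Gf \<alpha> \<gamma> \<mu> c \<mu> = - \<gamma> / c" unfolding Gf_def by simp
  have d: "R - \<mu> + c > 0" using mR c by simp
  have t1: "arctan (sqrt ((R - \<mu>) / c)) / sqrt c \<le> (pi / 2) / sqrt c"
    using arctan_ubound[of "sqrt ((R - \<mu>) / c)"] c by (intro divide_right_mono) auto
  have t2: "sqrt (R - \<mu>) / (R - \<mu> + c) \<ge> 0" using d mR by simp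
  have t3: "\<gamma> / (R - \<mu> + c) \<ge> 0" using d g by simp
  have "Gf \<alpha> \<gamma> \<mu> c R \<le> \<alpha> * ((pi / 2) / sqrt c)"
  proof -
    have "arctan (sqrt ((R - \<mu>) / c)) / sqrt c - sqrt (R - \<mu>) / (R - \<mu> + c) \<le> (pi / 2) / sqrt c"
      using t1 t2 by linarith
    hence "\<alpha> * (arctan (sqrt ((R - \<mu>) / c)) / sqrt c - sqrt (R - \<mu>) / (R - \<mu> + c)) \<le> \<alpha> * ((pi / 2) / sqrt c)"
      using a by (rule mult_left_mono)
    thus ?thesis unfolding Gf_def using t3 by linarith
  qed
  moreover have "\<alpha> * ((pi / 2) / sqrt c) = \<alpha> * pi / (2 * sqrt c)" by simp
  ultimately show ?thesis using G0 by simp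
qed

lemma finite_lat: "finite {p::int\<times>int. real_of_int (fst p)^2 + real_of_int (snd p)^2 \<le> R}"
proof (cases "R \<ge> 0")
  case True
  let ?k = "\<lfloor>sqrt R\<rfloor>"
  have "{p::int\<times>int. real_of_int (fst p)^2 + real_of_int (snd p)^2 \<le> R} \<subseteq> {-?k..?k} \<times> {-?k..?k}"
  proof
    fix p :: "int \<times> int" assume "p \<in> {p. real_of_int (fst p)^2 + real_of_int (snd p)^2 \<le> R}"
    hence h: "real_of_int (fst p)^2 + real_of_int (snd p)^2 \<le> R" by simp
    have "real_of_int (fst p)^2 \<le> R" using h zero_le_power2[of "real_of_int (snd p)"] by linarith
    hence 1: "fst p \<in> {-?k..?k}" using int_sq_set[OF True] by blast
    have "real_of_int (snd p)^2 \<le> R" using h zero_le_power2[of "real_of_int (fst p)"] by linarith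
    hence 2: "snd p \<in> {-?k..?k}" using int_sq_set[OF True] by blast
    from 1 2 show "p \<in> {-?k..?k} \<times> {-?k..?k}" by (simp add: mem_Times_iff)
  qed
  thus ?thesis by (rule finite_subset) simp
next
  case False
  have "real_of_int (fst p)^2 + real_of_int (snd p)^2 \<le> R \<Longrightarrow> False" for p :: "int \<times> int"
    using False zero_le_power2[of "real_of_int (fst p)"] zero_le_power2[of "real_of_int (snd p)"] by linarith
  hence "{p::int\<times>int. real_of_int (fst p)^2 + real_of_int (snd p)^2 \<le> R} = {}" by blast
  thus ?thesis by simp
qed

lemma lattice_sq_eq: "lattice_sq L p = (2 * pi / L)^2 * (real_of_int (fst p)^2 + real_of_int (snd p)^2)"
  unfolding lattice_sq_def ..

lemma lattice_sq_nonneg: "lattice_sq L p \<ge> 0"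
  unfolding lattice_sq_def by simp

lemma lat_set_eq:
  assumes L: "L > 0"
  shows "{p. lattice_sq L p \<le> s} = {p::int\<times>int. real_of_int (fst p)^2 + real_of_int (snd p)^2 \<le> s / (2 * pi / L)^2}"
proof -
  have u: "(2 * pi / L)^2 > 0" using L by simp
  have key: "(2 * pi / L)^2 * X \<le> s \<longleftrightarrow> X \<le> s / (2 * pi / L)^2" for X
    using u by (simp add: pos_le_divide_eq mult.commute)
  show ?thesis
  proof (rule set_eqI)
    fix p :: "int \<times> int"
    show "p \<in> {p. lattice_sq L p \<le> s} \<longleftrightarrow> p \<in> {p::int\<times>int. real_of_int (fst p)^2 + real_of_int (snd p)^2 \<le> s / (2 * pi / L)^2}"
      unfolding mem_Collect_eq lattice_sq_def by (rule key)
  qed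
qed

lemma finite_lat_sq: "L > 0 \<Longrightarrow> finite {p. lattice_sq L p \<le> s}"
  using finite_lat lat_set_eq by simp

lemma M_bound:
  assumes L: "L > 0" and s: "s \<ge> 0"
  shows "\<bar>real (card {p. lattice_sq L p \<le> s}) - pi / (2 * pi / L)^2 * s\<bar> \<le> 4 * sqrt s / (2 * pi / L) + 1"
proof -
  define u where "u = 2 * pi / L"
  have u: "u > 0" unfolding u_def using L by simp
  have "s / u^2 \<ge> 0" using s by simp
  from lattice_bound[OF this]
  have "\<bar>real (Ncnt (s / u^2)) - pi * (s / u^2)\<bar> \<le> 4 * sqrt (s / u^2) + 1" .
  moreover have "sqrt (s / u^2) = sqrt s / u" using u by (simp add: real_sqrt_divide)
  moreover have "real (Ncnt (s / u^2)) = real (card {p. lattice_sq L p \<le> s})"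
    unfolding Ncnt_def lat_set_eq[OF L] u_def ..
  ultimately show ?thesis unfolding u_def by simp
qed

lemma d_inv:
  fixes x a :: real
  assumes "x + a \<noteq> 0"
  shows "((\<lambda>s. 1 / (s + a)) has_real_derivative - 1 / (x + a)^2) (at x)"
proof -
  have dd: "((\<lambda>s. s + a) has_real_derivative 1) (at x)" by (auto intro!: derivative_eq_intros)
  have "((\<lambda>s. 1 / (s + a)) has_real_derivative (0 * (x + a) - 1 * 1) / ((x + a) * (x + a))) (at x)"
    by (rule DERIV_divide[OF DERIV_const dd assms])
  moreover have "(0 * (x + a) - 1 * 1) / ((x + a) * (x + a)) = - 1 / (x + a)^2"
    by (simp add: power2_eq_square)
  ultimately show ?thesis by simp
qed

lemma neg_div: "(a - x) / (Q::real) = - ((x - a) / Q)"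
  by (metis minus_diff_eq minus_divide_left)

lemma inv_aux:
  fixes q b :: real
  assumes "q \<noteq> 0"
  shows "- (inverse q * 1) - (0 * q - b * 1) / (q * q) = (b - q) / (q * q)"
  using assms by (simp add: field_simps)

lemma cont_part:
  fixes a t R :: real
  assumes aR: "a \<le> R" and at: "a + t > 0"
  shows "((\<lambda>s. (s - a) * (- 1 / (s + t)^2)) has_integral ((R - a) / (R + t) - (ln (R + t) - ln (a + t)))) {a..R}"
proof -
  define F where "F s = - ln (s + t) - (a + t) / (s + t)" for s
  have der: "(F has_vector_derivative (x - a) * (- 1 / (x + t)^2)) (at x within {a..R})"
    if x: "x \<in> {a..R}" for x
  proof -
    have pos: "x + t > 0" using x at by simp
    have d1: "((\<lambda>s. s + t) has_real_derivative 1) (at x)" by (auto intro!: derivative_eq_intros)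
    have dl: "((\<lambda>s. ln (s + t)) has_real_derivative (inverse (x + t) * 1)) (at x)"
      using DERIV_chain2[where f=ln and g="\<lambda>s. s + t", OF DERIV_ln[OF pos] d1] by simp
    have dq: "((\<lambda>s. (a + t) / (s + t)) has_real_derivative
        (0 * (x + t) - (a + t) * 1) / ((x + t) * (x + t))) (at x)"
      using pos by (intro DERIV_divide[OF DERIV_const d1]) simp
    have dF: "(F has_real_derivative (- (inverse (x + t) * 1) - (0 * (x + t) - (a + t) * 1) / ((x + t) * (x + t)))) (at x)"
      unfolding F_def[abs_def] by (rule DERIV_diff[OF DERIV_minus[OF dl] dq])
    have "- (inverse (x + t) * 1) - (0 * (x + t) - (a + t) * 1) / ((x + t) * (x + t))
        = ((a + t) - (x + t)) / ((x + t) * (x + t))"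
      using pos by (intro inv_aux) simp
    also have "\<dots> = (x - a) * (- 1 / (x + t)^2)"
      by (simp add: power2_eq_square, rule neg_div)
    finally have "- (inverse (x + t) * 1) - (0 * (x + t) - (a + t) * 1) / ((x + t) * (x + t))
        = (x - a) * (- 1 / (x + t)^2)" .
    with dF have "(F has_real_derivative (x - a) * (- 1 / (x + t)^2)) (at x)" by simp
    thus ?thesis
      by (simp add: has_real_derivative_iff_has_vector_derivative has_vector_derivative_at_within)
  qed
  have "((\<lambda>s. (s - a) * (- 1 / (s + t)^2)) has_integral (F R - F a)) {a..R}"
    by (rule fundamental_theorem_of_calculus[OF aR der])
  moreover have "F R - F a = (R - a) / (R + t) - (ln (R + t) - ln (a + t))"
    unfolding F_def using at aR by (simp add: field_simps)
  ultimately show ?thesis by simp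
qed

lemma hi_abs_bound:
  fixes f g :: "real \<Rightarrow> real"
  assumes "(f has_integral i) S" "(g has_integral j) S" "\<And>x. x \<in> S \<Longrightarrow> \<bar>f x\<bar> \<le> g x"
  shows "\<bar>i\<bar> \<le> j"
  using has_integral_norm_bound_integral_component[OF assms(1,2), of 1] assms(3) by simp

lemma K_ineq:
  fixes L \<mu> \<tau> :: real
  assumes L: "L > 0" and mu: "\<mu> > 0" and tau: "\<tau> > - \<mu>"
  shows "(L + 1 + L / sqrt (\<mu> + \<tau>) + (4 * L * sqrt \<mu> / pi + 2) / (\<mu> + \<tau>)) / L^2 \<le> K_const \<tau> \<mu> L / L"
proof -
  define m where "m = \<mu> + min \<tau> 1"
  define c where "c = \<mu> + \<tau>"
  have m: "m > 0" unfolding m_def using mu tau by (simp add: min_def)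
  have mc: "m \<le> c" unfolding m_def c_def by simp
  have c: "c > 0" using m mc by simp
  have i1: "1 / sqrt c \<le> 1 / sqrt m" using m mc by (simp add: frac_le)
  have i2: "1 / c \<le> 1 / m" using m mc by (simp add: frac_le)
  have sm: "sqrt \<mu> \<ge> 0" using mu by simp
  have lhs: "(L + 1 + L / sqrt c + (4 * L * sqrt \<mu> / pi + 2) / c) / L^2
      = 1 / L + 1 / L^2 + (1 / L) * (1 / sqrt c) + (4 * sqrt \<mu> / pi / L) * (1 / c) + (2 / L^2) * (1 / c)"
    using L c by (simp add: field_simps power2_eq_square)
  have rhs: "K_const \<tau> \<mu> L / L
      = 1 / L + 3 / L^2 + (1 / L) * (1 / sqrt m) + (4 * sqrt \<mu> / pi / L) * (1 / m) + (6 / L^2) * (1 / m)"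
    unfolding K_const_def m_def[symmetric] using L m by (simp add: field_simps power2_eq_square)
  have a1: "(1 / L) * (1 / sqrt c) \<le> (1 / L) * (1 / sqrt m)" using i1 L by (intro mult_left_mono) auto
  have a2: "(4 * sqrt \<mu> / pi / L) * (1 / c) \<le> (4 * sqrt \<mu> / pi / L) * (1 / m)" using i2 L sm by (intro mult_left_mono) auto
  have a3: "(2 / L^2) * (1 / c) \<le> (6 / L^2) * (1 / m)"
  proof -
    have "(2 / L^2) * (1 / c) \<le> (2 / L^2) * (1 / m)" using i2 L by (intro mult_left_mono) auto
    also have "\<dots> \<le> (6 / L^2) * (1 / m)" using L m by (intro mult_right_mono divide_right_mono) auto
    finally show ?thesis .
  qed
  have a4: "1 / L^2 \<le> 3 / L^2" using L by (simp add: divide_right_mono)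
  show ?thesis unfolding c_def[symmetric] lhs rhs using a1 a2 a3 a4 by linarith
qed

definition err :: "real \<Rightarrow> real \<Rightarrow> real \<Rightarrow> real \<Rightarrow> real" where
  "err L \<mu> \<tau> R = ((4 / (2*pi/L) * sqrt R + 1) * \<bar>\<tau> - 1\<bar> / ((R + 1) * (R + \<tau>))
      + (4 / (2*pi/L) * sqrt \<mu> + 1) / (R + \<tau>)) / L^2 + \<bar>ln (R + 1) - ln (R + \<tau>)\<bar> / (4 * pi)"

lemma finite_R:
  fixes L \<mu> \<tau> R :: real
  assumes L: "L > 0" and mu: "\<mu> > 0" and tau: "\<tau> > - \<mu>" and R: "R \<ge> \<mu>"
  shows "\<bar>(\<Sum>p\<in>{p. lattice_sq L p \<le> R}. 1 / (lattice_sq L p + 1)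
            - (if \<mu> < lattice_sq L p then 1 / (lattice_sq L p + \<tau>) else 0)) / L^2
          - ln (\<mu> + \<tau>) / (4 * pi)\<bar> \<le> K_const \<tau> \<mu> L / L + err L \<mu> \<tau> R"
proof -
  define sq where "sq = lattice_sq L"
  define u where "u = 2 * pi / L"
  define \<alpha> where "\<alpha> = 4 / u"
  define lam where "lam = pi / u^2"
  define B where "B s = \<alpha> * sqrt s + 1" for s
  define c where "c = \<mu> + \<tau>"
  define Mf where "Mf s = real (card {p. sq p \<le> s})" for s
  have u: "u > 0" unfolding u_def using L by simp
  have al: "\<alpha> > 0" unfolding \<alpha>_def using u by simp
  have c: "c > 0" unfolding c_def using tau by simp
  have R0: "R > 0" using R mu by simp
  have sq0: "sq p \<ge> 0" for p unfolding sq_def by (rule lattice_sq_nonneg)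
  have Mb: "\<bar>Mf s - lam * s\<bar> \<le> B s" if "s \<ge> 0" for s
    using M_bound[OF L that] unfolding Mf_def lam_def B_def \<alpha>_def u_def sq_def by simp
  have B0: "B s \<ge> 0" if "s \<ge> 0" for s unfolding B_def using al that by simp
  define BR where "BR = {p. sq p \<le> R}"
  have finBR: "finite BR" unfolding BR_def sq_def using finite_lat_sq[OF L] .
  define P2 where "P2 = {p\<in>BR. \<mu> < sq p}"
  have finP2: "finite P2" unfolding P2_def using finBR by simp
  define S1 where "S1 = (\<Sum>p\<in>BR. 1 / (sq p + 1))"
  define S2 where "S2 = (\<Sum>p\<in>P2. 1 / (sq p + \<tau>))"
  have split: "(\<Sum>p\<in>BR. 1 / (sq p + 1) - (if \<mu> < sq p then 1 / (sq p + \<tau>) else 0)) = S1 - S2"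
    unfolding S1_def S2_def P2_def using finBR by (simp add: sum_subtractf sum.inter_filter)
  have A1: "((\<lambda>s. real (card {p\<in>BR. sq p \<le> s}) * (- 1 / (s + 1)^2)) has_integral
      (real (card BR) * (1 / (R + 1)) - S1)) {0..R}"
    unfolding S1_def
  proof (rule abel_sum[OF finBR])
    show "0 \<le> sq p \<and> sq p \<le> R" if "p \<in> BR" for p using that sq0 unfolding BR_def by auto
    show "((\<lambda>s. 1 / (s + 1)) has_real_derivative - 1 / (s + 1)^2) (at s)" if "s \<in> {0..R}" for s
      using that by (intro d_inv) auto
  qed
  have C1: "real (card {p\<in>BR. sq p \<le> s}) = Mf s" if "s \<in> {0..R}" for s
  proof -
    have "{p\<in>BR. sq p \<le> s} = {p. sq p \<le> s}" using that unfolding BR_def by auto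
    thus ?thesis unfolding Mf_def by simp
  qed
  have cBR: "real (card BR) = Mf R" unfolding Mf_def BR_def ..
  have Co1: "((\<lambda>s. (s - 0) * (- 1 / (s + 1)^2) * lam) has_integral
      (((R - 0) / (R + 1) - (ln (R + 1) - ln (0 + 1))) * lam)) {0..R}"
    by (rule has_integral_mult_left, rule cont_part) (use R0 in auto)
  define I1 where "I1 = (Mf R - lam * R) / (R + 1) + lam * ln (R + 1) - S1"
  have D1: "((\<lambda>s. real (card {p\<in>BR. sq p \<le> s}) * (- 1 / (s + 1)^2) - (s - 0) * (- 1 / (s + 1)^2) * lam)
      has_integral I1) {0..R}"
  proof -
    have "(real (card BR) * (1 / (R + 1)) - S1) - ((R - 0) / (R + 1) - (ln (R + 1) - ln (0 + 1))) * lam = I1"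
      unfolding I1_def cBR by (simp add: diff_divide_distrib algebra_simps)
    thus ?thesis using has_integral_diff[OF A1 Co1] by simp
  qed
  have G1: "((\<lambda>s. (\<alpha> * sqrt (s - 0) + 1) / (s - 0 + 1)^2) has_integral (Gf \<alpha> 1 0 1 R - Gf \<alpha> 1 0 1 0)) {0..R}"
    by (rule Gf_int) (use R0 in auto)
  have absI1: "\<bar>I1\<bar> \<le> Gf \<alpha> 1 0 1 R - Gf \<alpha> 1 0 1 0"
  proof (rule hi_abs_bound[OF D1 G1])
    fix s assume s: "s \<in> {0..R}"
    have q: "(s + 1)^2 > 0" using s by simp
    have "real (card {p\<in>BR. sq p \<le> s}) * (- 1 / (s + 1)^2) - (s - 0) * (- 1 / (s + 1)^2) * lam
        = - ((Mf s - lam * s) * (1 / (s + 1)^2))" using C1[OF s] by (simp add: algebra_simps diff_divide_distrib)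
    hence "\<bar>real (card {p\<in>BR. sq p \<le> s}) * (- 1 / (s + 1)^2) - (s - 0) * (- 1 / (s + 1)^2) * lam\<bar>
        = \<bar>Mf s - lam * s\<bar> * (1 / (s + 1)^2)" using q by (simp add: abs_mult)
    also have "\<dots> \<le> B s * (1 / (s + 1)^2)" using Mb[of s] s q by (intro mult_right_mono) auto
    also have "\<dots> = (\<alpha> * sqrt (s - 0) + 1) / (s - 0 + 1)^2" unfolding B_def by simp
    finally show "\<bar>real (card {p\<in>BR. sq p \<le> s}) * (- 1 / (s + 1)^2) - (s - 0) * (- 1 / (s + 1)^2) * lam\<bar>
        \<le> (\<alpha> * sqrt (s - 0) + 1) / (s - 0 + 1)^2" .
  qed
  have bI1: "\<bar>I1\<bar> \<le> \<alpha> * pi / 2 + 1"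
    using absI1 Gf_bound[of 0 R 1 \<alpha> 1] R0 al by simp
  have A2: "((\<lambda>s. real (card {p\<in>P2. sq p \<le> s}) * (- 1 / (s + \<tau>)^2)) has_integral
      (real (card P2) * (1 / (R + \<tau>)) - S2)) {\<mu>..R}"
    unfolding S2_def
  proof (rule abel_sum[OF finP2])
    show "\<mu> \<le> sq p \<and> sq p \<le> R" if "p \<in> P2" for p using that unfolding P2_def BR_def by auto
    show "((\<lambda>s. 1 / (s + \<tau>)) has_real_derivative - 1 / (s + \<tau>)^2) (at s)" if "s \<in> {\<mu>..R}" for s
      using that tau by (intro d_inv) auto
  qed
  have finM: "finite {p. sq p \<le> s}" for s unfolding sq_def using finite_lat_sq[OF L] .
  have C2: "real (card {p\<in>P2. sq p \<le> s}) = Mf s - Mf \<mu>" if s: "s \<in> {\<mu>..R}" for s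
  proof -
    have e: "{p\<in>P2. sq p \<le> s} = {p. sq p \<le> s} - {p. sq p \<le> \<mu>}" using s unfolding P2_def BR_def by auto
    have sub: "{p. sq p \<le> \<mu>} \<subseteq> {p. sq p \<le> s}" using s by auto
    have "card {p\<in>P2. sq p \<le> s} = card {p. sq p \<le> s} - card {p. sq p \<le> \<mu>}"
      unfolding e by (rule card_Diff_subset[OF finM sub])
    moreover have "card {p. sq p \<le> \<mu>} \<le> card {p. sq p \<le> s}" by (rule card_mono[OF finM sub])
    ultimately show ?thesis unfolding Mf_def by (simp add: of_nat_diff)
  qed
  have cP2: "real (card P2) = Mf R - Mf \<mu>"
  proof -
    have "{p\<in>P2. sq p \<le> R} = P2" unfolding P2_def BR_def by auto
    thus ?thesis using C2[of R] R by simp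
  qed
  have Co2: "((\<lambda>s. (s - \<mu>) * (- 1 / (s + \<tau>)^2) * lam) has_integral
      (((R - \<mu>) / (R + \<tau>) - (ln (R + \<tau>) - ln (\<mu> + \<tau>))) * lam)) {\<mu>..R}"
    by (rule has_integral_mult_left, rule cont_part) (use R tau in auto)
  define I2 where "I2 = ((Mf R - lam * R) - (Mf \<mu> - lam * \<mu>)) / (R + \<tau>) + lam * (ln (R + \<tau>) - ln c) - S2"
  have Rt: "R + \<tau> > 0" using R tau by simp
  have D2: "((\<lambda>s. real (card {p\<in>P2. sq p \<le> s}) * (- 1 / (s + \<tau>)^2) - (s - \<mu>) * (- 1 / (s + \<tau>)^2) * lam)
      has_integral I2) {\<mu>..R}"
  proof -
    have "(real (card P2) * (1 / (R + \<tau>)) - S2) - ((R - \<mu>) / (R + \<tau>) - (ln (R + \<tau>) - ln (\<mu> + \<tau>))) * lam = I2"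
      unfolding I2_def cP2 c_def by (simp add: diff_divide_distrib add_divide_distrib algebra_simps)
    thus ?thesis using has_integral_diff[OF A2 Co2] by simp
  qed
  define \<gamma>2 where "\<gamma>2 = \<alpha> * sqrt \<mu> + 1 + B \<mu>"
  have g2: "\<gamma>2 \<ge> 0" unfolding \<gamma>2_def using al B0[of \<mu>] mu by simp
  have G2: "((\<lambda>s. (\<alpha> * sqrt (s - \<mu>) + \<gamma>2) / (s - \<mu> + c)^2) has_integral (Gf \<alpha> \<gamma>2 \<mu> c R - Gf \<alpha> \<gamma>2 \<mu> c \<mu>)) {\<mu>..R}"
    by (rule Gf_int) (use R c in auto)
  have absI2: "\<bar>I2\<bar> \<le> Gf \<alpha> \<gamma>2 \<mu> c R - Gf \<alpha> \<gamma>2 \<mu> c \<mu>"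
  proof (rule hi_abs_bound[OF D2 G2])
    fix s assume s: "s \<in> {\<mu>..R}"
    have st: "s + \<tau> = s - \<mu> + c" unfolding c_def by simp
    have q: "(s + \<tau>)^2 > 0" using s tau by simp
    have "real (card {p\<in>P2. sq p \<le> s}) * (- 1 / (s + \<tau>)^2) - (s - \<mu>) * (- 1 / (s + \<tau>)^2) * lam
        = - (((Mf s - lam * s) - (Mf \<mu> - lam * \<mu>)) * (1 / (s + \<tau>)^2))" unfolding C2[OF s] by (simp add: algebra_simps diff_divide_distrib add_divide_distrib)
    hence "\<bar>real (card {p\<in>P2. sq p \<le> s}) * (- 1 / (s + \<tau>)^2) - (s - \<mu>) * (- 1 / (s + \<tau>)^2) * lam\<bar>
        = \<bar>(Mf s - lam * s) - (Mf \<mu> - lam * \<mu>)\<bar> * (1 / (s + \<tau>)^2)" using q by (simp add: abs_mult)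
    also have "\<dots> \<le> (\<alpha> * sqrt (s - \<mu>) + \<gamma>2) * (1 / (s + \<tau>)^2)"
    proof (rule mult_right_mono)
      have m1: "\<bar>Mf s - lam * s\<bar> \<le> B s" using Mb[of s] s mu by auto
      have m2: "\<bar>Mf \<mu> - lam * \<mu>\<bar> \<le> B \<mu>" using Mb[of \<mu>] mu by auto
      have sq_le: "sqrt s \<le> sqrt (s - \<mu>) + sqrt \<mu>"
        using sqrt_add_le_add_sqrt[of "s - \<mu>" \<mu>] s mu by simp
      have "B s \<le> \<alpha> * (sqrt (s - \<mu>) + sqrt \<mu>) + 1" unfolding B_def using sq_le al by simp
      hence "B s + B \<mu> \<le> \<alpha> * sqrt (s - \<mu>) + \<gamma>2" unfolding \<gamma>2_def by (simp add: algebra_simps)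
      thus "\<bar>(Mf s - lam * s) - (Mf \<mu> - lam * \<mu>)\<bar> \<le> \<alpha> * sqrt (s - \<mu>) + \<gamma>2"
        using m1 m2 abs_triangle_ineq4[of "Mf s - lam * s" "Mf \<mu> - lam * \<mu>"] by linarith
      show "0 \<le> 1 / (s + \<tau>)^2" by simp
    qed
    also have "\<dots> = (\<alpha> * sqrt (s - \<mu>) + \<gamma>2) / (s - \<mu> + c)^2" unfolding st by simp
    finally show "\<bar>real (card {p\<in>P2. sq p \<le> s}) * (- 1 / (s + \<tau>)^2) - (s - \<mu>) * (- 1 / (s + \<tau>)^2) * lam\<bar>
        \<le> (\<alpha> * sqrt (s - \<mu>) + \<gamma>2) / (s - \<mu> + c)^2" .
  qed
  have bI2: "\<bar>I2\<bar> \<le> \<alpha> * pi / (2 * sqrt c) + \<gamma>2 / c"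
    using absI2 Gf_bound[of \<mu> R c \<alpha> \<gamma>2] R c al g2 by simp
  define DR where "DR = Mf R - lam * R"
  define Dm where "Dm = Mf \<mu> - lam * \<mu>"
  define X where "X = DR / (R + 1) - (DR - Dm) / (R + \<tau>) - I1 + I2"
  define Z where "Z = (ln (R + 1) - ln (R + \<tau>)) / (4 * pi)"
  have S12: "S1 - S2 = X + lam * (ln (R + 1) - ln (R + \<tau>) + ln c)"
    unfolding X_def I1_def I2_def DR_def Dm_def by (simp add: algebra_simps)
  have lamL: "lam / L^2 = 1 / (4 * pi)" unfolding lam_def u_def using L by (simp add: field_simps power2_eq_square)
  have key: "(S1 - S2) / L^2 - ln c / (4 * pi) = X / L^2 + Z"
  proof -
    have "(S1 - S2) / L^2 = X / L^2 + (lam / L^2) * (ln (R + 1) - ln (R + \<tau>) + ln c)"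
      unfolding S12 by (simp add: add_divide_distrib)
    also have "\<dots> = X / L^2 + (ln (R + 1) - ln (R + \<tau>) + ln c) / (4 * pi)" unfolding lamL by simp
    finally show ?thesis unfolding Z_def by (simp add: add_divide_distrib diff_divide_distrib)
  qed
  have e1: "\<bar>DR / (R + 1) - (DR - Dm) / (R + \<tau>)\<bar> \<le> B R * \<bar>\<tau> - 1\<bar> / ((R + 1) * (R + \<tau>)) + B \<mu> / (R + \<tau>)"
  proof -
    have R1: "R + 1 > 0" using R0 by simp
    have f1: "1 / (R + 1) - 1 / (R + \<tau>) = (\<tau> - 1) / ((R + 1) * (R + \<tau>))"
      using diff_frac_eq[of "R + 1" "R + \<tau>" 1 1] R1 Rt by simp
    have "DR / (R + 1) - (DR - Dm) / (R + \<tau>) = DR * (1 / (R + 1) - 1 / (R + \<tau>)) + Dm / (R + \<tau>)"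
      by (simp add: diff_divide_distrib right_diff_distrib)
    hence "DR / (R + 1) - (DR - Dm) / (R + \<tau>) = DR * (\<tau> - 1) / ((R + 1) * (R + \<tau>)) + Dm / (R + \<tau>)"
      unfolding f1 by simp
    hence "\<bar>DR / (R + 1) - (DR - Dm) / (R + \<tau>)\<bar> \<le> \<bar>DR\<bar> * \<bar>\<tau> - 1\<bar> / ((R + 1) * (R + \<tau>)) + \<bar>Dm\<bar> / (R + \<tau>)"
      using R1 Rt by (simp add: abs_mult abs_triangle_ineq[THEN order_trans])
    also have "\<dots> \<le> B R * \<bar>\<tau> - 1\<bar> / ((R + 1) * (R + \<tau>)) + B \<mu> / (R + \<tau>)"
    proof (rule add_mono)
      have "\<bar>DR\<bar> \<le> B R" unfolding DR_def using Mb[of R] R0 by simp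
      thus "\<bar>DR\<bar> * \<bar>\<tau> - 1\<bar> / ((R + 1) * (R + \<tau>)) \<le> B R * \<bar>\<tau> - 1\<bar> / ((R + 1) * (R + \<tau>))"
        using R1 Rt by (intro divide_right_mono mult_right_mono) auto
      have "\<bar>Dm\<bar> \<le> B \<mu>" unfolding Dm_def using Mb[of \<mu>] mu by simp
      thus "\<bar>Dm\<bar> / (R + \<tau>) \<le> B \<mu> / (R + \<tau>)" using Rt by (intro divide_right_mono) auto
    qed
    finally show ?thesis .
  qed
  have absX: "\<bar>X\<bar> \<le> (B R * \<bar>\<tau> - 1\<bar> / ((R + 1) * (R + \<tau>)) + B \<mu> / (R + \<tau>)) + (\<bar>I1\<bar> + \<bar>I2\<bar>)"
    unfolding X_def using e1 by linarith
  have IK: "(\<bar>I1\<bar> + \<bar>I2\<bar>) / L^2 \<le> K_const \<tau> \<mu> L / L"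
  proof -
    have ap: "\<alpha> * pi / 2 = L" unfolding \<alpha>_def u_def using L by (simp add: field_simps)
    have "\<bar>I1\<bar> + \<bar>I2\<bar> \<le> L + 1 + L / sqrt (\<mu> + \<tau>) + (4 * L * sqrt \<mu> / pi + 2) / (\<mu> + \<tau>)"
    proof -
      have eq1: "\<alpha> * pi / (2 * sqrt c) = L / sqrt c" using ap by (simp add: field_simps)
      have g2eq: "\<gamma>2 = 4 * L * sqrt \<mu> / pi + 2"
        unfolding \<gamma>2_def B_def \<alpha>_def u_def using L by (simp add: field_simps)
      have i2: "\<bar>I2\<bar> \<le> L / sqrt c + (4 * L * sqrt \<mu> / pi + 2) / c" using bI2 unfolding eq1 g2eq .
      have i1: "\<bar>I1\<bar> \<le> L + 1" using bI1 ap by simp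
      show ?thesis unfolding c_def[symmetric] using i1 i2 by linarith
    qed
    hence "(\<bar>I1\<bar> + \<bar>I2\<bar>) / L^2 \<le> (L + 1 + L / sqrt (\<mu> + \<tau>) + (4 * L * sqrt \<mu> / pi + 2) / (\<mu> + \<tau>)) / L^2"
      using L by (intro divide_right_mono) auto
    also have "\<dots> \<le> K_const \<tau> \<mu> L / L" by (rule K_ineq[OF L mu tau])
    finally show ?thesis .
  qed
  have errR: "err L \<mu> \<tau> R = (B R * \<bar>\<tau> - 1\<bar> / ((R + 1) * (R + \<tau>)) + B \<mu> / (R + \<tau>)) / L^2 + \<bar>Z\<bar>"
    unfolding err_def B_def \<alpha>_def u_def Z_def by simp
  have main: "\<bar>(S1 - S2) / L^2 - ln c / (4 * pi)\<bar> \<le> K_const \<tau> \<mu> L / L + err L \<mu> \<tau> R"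
  proof -
    have "\<bar>(S1 - S2) / L^2 - ln c / (4 * pi)\<bar> \<le> \<bar>X\<bar> / L^2 + \<bar>Z\<bar>"
      unfolding key using L by (simp add: abs_triangle_ineq[THEN order_trans] abs_divide)
    also have "\<bar>X\<bar> / L^2 \<le> ((B R * \<bar>\<tau> - 1\<bar> / ((R + 1) * (R + \<tau>)) + B \<mu> / (R + \<tau>)) + (\<bar>I1\<bar> + \<bar>I2\<bar>)) / L^2"
      using absX L by (intro divide_right_mono) auto
    finally show ?thesis unfolding errR using IK by (simp add: add_divide_distrib)
  qed
  show ?thesis using main split unfolding BR_def sq_def c_def by simp
qed

lemma fbound:
  fixes s \<mu> \<tau> :: real
  assumes s: "s \<ge> 0" and mu: "\<mu> > 0" and tau: "\<tau> > - \<mu>"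
  shows "\<bar>1 / (s - -1) - (if \<mu> < s then 1 / (s + \<tau>) else 0)\<bar>
     \<le> (\<mu> + 1 + \<bar>\<tau> - 1\<bar> * (1 + (\<mu> + 1) / (\<mu> + \<tau>))) * (1 / (s + 1) * (1 / (s + 1)))"
proof -
  define c where "c = \<mu> + \<tau>"
  have c: "c > 0" unfolding c_def using tau by simp
  define A where "A = 1 + (\<mu> + 1) / c"
  have A1: "A \<ge> 1" unfolding A_def using c mu by simp
  have s1: "s + 1 > 0" using s by simp
  define g where "g = 1 / (s + 1) * (1 / (s + 1))"
  have g0: "g \<ge> 0" unfolding g_def using s1 by simp
  have Cge: "\<mu> + 1 \<le> \<mu> + 1 + \<bar>\<tau> - 1\<bar> * A" using A1 by simp
  show ?thesis
  proof (cases "\<mu> < s")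
    case False
    have "\<bar>1 / (s - -1) - (if \<mu> < s then 1 / (s + \<tau>) else 0)\<bar> = (s + 1) * g"
      using False s1 unfolding g_def by simp
    also have "\<dots> \<le> (\<mu> + 1) * g" using False g0 by (intro mult_right_mono) auto
    also have "\<dots> \<le> (\<mu> + 1 + \<bar>\<tau> - 1\<bar> * A) * g" using Cge g0 by (intro mult_right_mono) auto
    finally show ?thesis unfolding A_def c_def g_def .
  next
    case True
    have st: "s + \<tau> > 0" using True tau by simp
    have e: "1 / (s + 1) - 1 / (s + \<tau>) = (\<tau> - 1) / ((s + 1) * (s + \<tau>))"
      using diff_frac_eq[of "s + 1" "s + \<tau>" 1 1] s1 st by simp
    have key: "1 / (s + \<tau>) \<le> A / (s + 1)"
    proof -
      have "A / (s + 1) - 1 / (s + \<tau>) = (A * (s + \<tau>) - 1 * (s + 1)) / ((s + 1) * (s + \<tau>))"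
        using diff_frac_eq[of "s + 1" "s + \<tau>" A 1] s1 st by simp
      moreover have "A * (s + \<tau>) - 1 * (s + 1) \<ge> 0"
      proof -
        have "(\<mu> + 1) / c * (s + \<tau>) \<ge> (\<mu> + 1) / c * c"
          using True mu c unfolding c_def by (intro mult_left_mono) auto
        hence "(\<mu> + 1) / c * (s + \<tau>) \<ge> \<mu> + 1" using c by simp
        thus ?thesis unfolding A_def using True tau by (simp add: algebra_simps)
      qed
      ultimately have "A / (s + 1) - 1 / (s + \<tau>) \<ge> 0" using s1 st by simp
      thus ?thesis by simp
    qed
    have "\<bar>1 / (s - -1) - (if \<mu> < s then 1 / (s + \<tau>) else 0)\<bar> = \<bar>\<tau> - 1\<bar> * (1 / (s + 1) * (1 / (s + \<tau>)))"
      using True e s1 st by (simp add: abs_mult abs_divide)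
    also have "\<dots> \<le> \<bar>\<tau> - 1\<bar> * (1 / (s + 1) * (A / (s + 1)))"
      using key s1 by (intro mult_left_mono) auto
    also have "\<dots> = (\<bar>\<tau> - 1\<bar> * A) * g" unfolding g_def by simp
    also have "\<dots> \<le> (\<mu> + 1 + \<bar>\<tau> - 1\<bar> * A) * g" using g0 mu by (intro mult_right_mono) auto
    finally show ?thesis unfolding A_def c_def g_def .
  qed
qed

lemma gsum_bound:
  fixes L R :: real
  assumes L: "L > 0" and R: "R \<ge> 0"
  shows "(\<Sum>p\<in>{p. lattice_sq L p \<le> R}. 1 / (lattice_sq L p + 1) * (1 / (lattice_sq L p + 1)))
     \<le> 3 * (pi / (2 * pi / L)^2 + 4 / (2 * pi / L) + 1)"
proof -
  define sq where "sq = lattice_sq L"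
  define u where "u = 2 * pi / L"
  define \<alpha> where "\<alpha> = 4 / u"
  define lam where "lam = pi / u^2"
  define K0 where "K0 = lam + \<alpha> + 1"
  define Mf where "Mf s = real (card {p. sq p \<le> s})" for s
  have u: "u > 0" unfolding u_def using L by simp
  have al: "\<alpha> > 0" unfolding \<alpha>_def using u by simp
  have lam0: "lam > 0" unfolding lam_def using u by simp
  have sq0: "sq p \<ge> 0" for p unfolding sq_def by (rule lattice_sq_nonneg)
  have Mb: "\<bar>Mf s - lam * s\<bar> \<le> \<alpha> * sqrt s + 1" if "s \<ge> 0" for s
    using M_bound[OF L that] unfolding Mf_def lam_def \<alpha>_def u_def sq_def by simp
  have Mle: "Mf s \<le> K0 * (s + 1)" if s: "s \<ge> 0" for s
  proof -
    have "sqrt s \<le> sqrt ((s + 1)^2)" using s by (intro real_sqrt_le_mono) (simp add: power2_eq_square algebra_simps)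
    hence sq1: "sqrt s \<le> s + 1" using s by simp
    have "Mf s \<le> lam * s + \<alpha> * sqrt s + 1" using Mb[OF s] by linarith
    also have "\<dots> \<le> lam * (s + 1) + \<alpha> * (s + 1) + 1 * (s + 1)"
      using sq1 al lam0 s by (intro add_mono mult_left_mono) auto
    also have "\<dots> = K0 * (s + 1)" unfolding K0_def by (simp add: algebra_simps)
    finally show ?thesis .
  qed
  have Mge: "Mf s \<ge> 0" for s unfolding Mf_def by simp
  define BR where "BR = {p. sq p \<le> R}"
  have finBR: "finite BR" unfolding BR_def sq_def using finite_lat_sq[OF L] .
  define h where "h s = - 1 / (s + 1)^2 * (1 / (s + 1)) + - 1 / (s + 1)^2 * (1 / (s + 1))" for s :: real
  define Sg where "Sg = (\<Sum>p\<in>BR. 1 / (sq p + 1) * (1 / (sq p + 1)))"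
  have A: "((\<lambda>s. real (card {p\<in>BR. sq p \<le> s}) * h s) has_integral
      (real (card BR) * (1 / (R + 1) * (1 / (R + 1))) - Sg)) {0..R}"
    unfolding Sg_def
  proof (rule abel_sum[OF finBR])
    show "0 \<le> sq p \<and> sq p \<le> R" if "p \<in> BR" for p using that sq0 unfolding BR_def by auto
    show "((\<lambda>s. 1 / (s + 1) * (1 / (s + 1))) has_real_derivative h s) (at s)" if "s \<in> {0..R}" for s
    proof -
      have "s + 1 \<noteq> 0" using that by simp
      from DERIV_mult[OF d_inv[OF this] d_inv[OF this]] show ?thesis unfolding h_def .
    qed
  qed
  have C1: "real (card {p\<in>BR. sq p \<le> s}) = Mf s" if "s \<in> {0..R}" for s
  proof -
    have "{p\<in>BR. sq p \<le> s} = {p. sq p \<le> s}" using that unfolding BR_def by auto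
    thus ?thesis unfolding Mf_def by simp
  qed
  have G: "((\<lambda>s. (0 * sqrt (s - 0) + 2 * K0) / (s - 0 + 1)^2) has_integral (Gf 0 (2 * K0) 0 1 R - Gf 0 (2 * K0) 0 1 0)) {0..R}"
    by (rule Gf_int) (use R in auto)
  have K0: "K0 > 0" unfolding K0_def using lam0 al by simp
  have absV: "\<bar>real (card BR) * (1 / (R + 1) * (1 / (R + 1))) - Sg\<bar> \<le> Gf 0 (2 * K0) 0 1 R - Gf 0 (2 * K0) 0 1 0"
  proof (rule hi_abs_bound[OF A G])
    fix s assume s: "s \<in> {0..R}"
    have s1: "s + 1 > 0" using s by simp
    have hs: "h s = - (2 * (1 / (s + 1)^2) * (1 / (s + 1)))" unfolding h_def by simp
    have "\<bar>real (card {p\<in>BR. sq p \<le> s}) * h s\<bar> = 2 * (1 / (s + 1)^2) * (Mf s * (1 / (s + 1)))"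
      unfolding C1[OF s] hs using Mge[of s] s1 by (simp add: abs_mult)
    also have "\<dots> \<le> 2 * (1 / (s + 1)^2) * K0"
    proof (rule mult_left_mono)
      show "Mf s * (1 / (s + 1)) \<le> K0" using Mle[of s] s s1 by (simp add: pos_divide_le_eq)
      show "0 \<le> 2 * (1 / (s + 1)^2)" by simp
    qed
    also have "\<dots> = (0 * sqrt (s - 0) + 2 * K0) / (s - 0 + 1)^2" by simp
    finally show "\<bar>real (card {p\<in>BR. sq p \<le> s}) * h s\<bar> \<le> (0 * sqrt (s - 0) + 2 * K0) / (s - 0 + 1)^2" .
  qed
  have GB: "Gf 0 (2 * K0) 0 1 R - Gf 0 (2 * K0) 0 1 0 \<le> 2 * K0"
    using Gf_bound[of 0 R 1 0 "2 * K0"] R K0 by simp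
  have cB: "real (card BR) * (1 / (R + 1) * (1 / (R + 1))) \<le> K0"
  proof -
    have r1: "R + 1 \<ge> 1" using R by simp
    have "real (card BR) = Mf R" unfolding Mf_def BR_def ..
    hence "real (card BR) * (1 / (R + 1)) \<le> K0" using Mle[OF R] r1 by (simp add: pos_divide_le_eq)
    moreover have "1 / (R + 1) \<le> 1" using r1 by simp
    moreover have "real (card BR) * (1 / (R + 1)) \<ge> 0" using r1 by simp
    ultimately have "real (card BR) * (1 / (R + 1)) * (1 / (R + 1)) \<le> K0 * 1"
      using r1 K0 by (intro mult_mono) auto
    thus ?thesis by (simp add: mult.assoc)
  qed
  define Xc where "Xc = real (card BR) * (1 / (R + 1) * (1 / (R + 1)))"
  define Gd where "Gd = Gf 0 (2 * K0) 0 1 R - Gf 0 (2 * K0) 0 1 0"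
  have a1: "- (Xc - Sg) \<le> \<bar>Xc - Sg\<bar>" by (rule abs_ge_minus_self)
  have a2: "\<bar>Xc - Sg\<bar> \<le> Gd" using absV unfolding Xc_def Gd_def .
  have a3: "Gd \<le> 2 * K0" using GB unfolding Gd_def .
  have a4: "Xc \<le> K0" using cB unfolding Xc_def .
  have "Sg \<le> 3 * K0" using a1 a2 a3 a4 by linarith
  thus ?thesis unfolding Sg_def BR_def sq_def K0_def lam_def \<alpha>_def u_def by simp
qed

lemma summable_f:
  fixes L \<mu> \<tau> :: real
  assumes L: "L > 0" and mu: "\<mu> > 0" and tau: "\<tau> > - \<mu>"
  shows "(\<lambda>p. 1 / (lattice_sq L p - -1) - (if \<mu> < lattice_sq L p then 1 / (lattice_sq L p + \<tau>) else 0)) summable_on UNIV"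
proof -
  define f where "f p = 1 / (lattice_sq L p - -1) - (if \<mu> < lattice_sq L p then 1 / (lattice_sq L p + \<tau>) else 0)" for p
  define g where "g p = 1 / (lattice_sq L p + 1) * (1 / (lattice_sq L p + 1))" for p
  define C where "C = \<mu> + 1 + \<bar>\<tau> - 1\<bar> * (1 + (\<mu> + 1) / (\<mu> + \<tau>))"
  define K where "K = 3 * (pi / (2 * pi / L)^2 + 4 / (2 * pi / L) + 1)"
  have fg: "norm (f p) \<le> C * g p" for p
    unfolding f_def g_def C_def real_norm_def by (rule fbound[OF lattice_sq_nonneg mu tau])
  have g0: "g p \<ge> 0" for p unfolding g_def using lattice_sq_nonneg[of L p] by simp
  have C0: "C \<ge> 0" unfolding C_def using mu tau by (simp add: add_nonneg_nonneg)
  have "(\<lambda>p. norm (f p)) summable_on UNIV"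
  proof (rule nonneg_bdd_above_summable_on)
    show "bdd_above (sum (\<lambda>x. norm (f x)) ` {F. F \<subseteq> UNIV \<and> finite F})"
    proof (rule bdd_aboveI2)
      fix F assume "F \<in> {F. F \<subseteq> (UNIV :: (int \<times> int) set) \<and> finite F}"
      hence fin: "finite F" by simp
      define R where "R = (\<Sum>p\<in>F. lattice_sq L p)"
      have R0: "R \<ge> 0" unfolding R_def using lattice_sq_nonneg by (simp add: sum_nonneg)
      have sub: "F \<subseteq> {p. lattice_sq L p \<le> R}"
      proof
        fix p assume "p \<in> F"
        hence "lattice_sq L p \<le> R" unfolding R_def using fin lattice_sq_nonneg
          by (intro member_le_sum) auto
        thus "p \<in> {p. lattice_sq L p \<le> R}" by simp
      qed
      have "(\<Sum>p\<in>F. norm (f p)) \<le> (\<Sum>p\<in>F. C * g p)" by (rule sum_mono) (rule fg)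
      also have "\<dots> = C * (\<Sum>p\<in>F. g p)" by (simp add: sum_distrib_left)
      also have "(\<Sum>p\<in>F. g p) \<le> (\<Sum>p\<in>{p. lattice_sq L p \<le> R}. g p)"
        by (rule sum_mono2[OF finite_lat_sq[OF L] sub]) (simp add: g0)
      also have "\<dots> \<le> K" unfolding g_def K_def by (rule gsum_bound[OF L R0])
      finally show "(\<Sum>p\<in>F. norm (f p)) \<le> C * K" using C0 by (simp add: mult_left_mono)
    qed
  qed simp
  hence "f summable_on UNIV" by (rule abs_summable_summable)
  thus ?thesis unfolding f_def .
qed

lemma main_E1:
  fixes L \<mu> \<tau> :: real
  assumes L: "L > 0" and mu: "\<mu> > 0" and tau: "\<tau> > - \<mu>"
  shows "\<bar>G_mu L (-1) \<mu> \<tau> - (1 / (4 * pi)) * ln (\<mu> + \<tau>)\<bar> \<le> K_const \<tau> \<mu> L / L"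
proof -
  define f where "f p = 1 / (lattice_sq L p - -1) - (if \<mu> < lattice_sq L p then 1 / (lattice_sq L p + \<tau>) else 0)" for p
  have summ: "f summable_on UNIV" unfolding f_def by (rule summable_f[OF L mu tau])
  define S where "S = infsum f UNIV"
  have hs: "(f has_sum S) UNIV" unfolding S_def using summ by (rule has_sum_infsum)
  have G: "G_mu L (-1) \<mu> \<tau> = (1 / L^2) * S" unfolding G_mu_def S_def f_def ..
  define BR where "BR R = {p. lattice_sq L p \<le> R}" for R
  have flim: "filterlim BR (finite_subsets_at_top UNIV) at_top"
    unfolding filterlim_finite_subsets_at_top
  proof (intro allI impI)
    fix X :: "(int \<times> int) set" assume X: "finite X \<and> X \<subseteq> UNIV"
    show "eventually (\<lambda>R. finite (BR R) \<and> X \<subseteq> BR R \<and> BR R \<subseteq> UNIV) at_top"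
    proof (rule eventually_at_top_linorderI[of "\<Sum>p\<in>X. lattice_sq L p"])
      fix R assume R: "R \<ge> (\<Sum>p\<in>X. lattice_sq L p)"
      have "X \<subseteq> BR R"
      proof
        fix p assume "p \<in> X"
        hence "lattice_sq L p \<le> (\<Sum>p\<in>X. lattice_sq L p)" using X lattice_sq_nonneg
          by (intro member_le_sum) auto
        thus "p \<in> BR R" unfolding BR_def using R by simp
      qed
      moreover have "finite (BR R)" unfolding BR_def by (rule finite_lat_sq[OF L])
      ultimately show "finite (BR R) \<and> X \<subseteq> BR R \<and> BR R \<subseteq> UNIV" by simp
    qed
  qed
  have lim: "((\<lambda>R. sum f (BR R)) \<longlongrightarrow> S) at_top"
    using filterlim_compose[OF hs[unfolded has_sum_def] flim] .
  have lim2: "((\<lambda>R. \<bar>sum f (BR R) / L^2 - ln (\<mu> + \<tau>) / (4 * pi)\<bar>) \<longlongrightarrow> \<bar>S / L^2 - ln (\<mu> + \<tau>) / (4 * pi)\<bar>) at_top"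
    using L by (intro tendsto_intros lim) auto
  have t1: "((\<lambda>R. (4 / (2*pi/L) * sqrt R + 1) * \<bar>\<tau> - 1\<bar> / ((R + 1) * (R + \<tau>))) \<longlongrightarrow> 0) at_top"
    by real_asymp
  have t2: "((\<lambda>R. (4 / (2*pi/L) * sqrt \<mu> + 1) / (R + \<tau>)) \<longlongrightarrow> 0) at_top"
    by real_asymp
  have t3: "((\<lambda>R. ln (R + 1) - ln (R + \<tau>)) \<longlongrightarrow> 0) at_top"
    by real_asymp
  have "((\<lambda>R. err L \<mu> \<tau> R) \<longlongrightarrow> (0 + 0) / L^2 + \<bar>0\<bar> / (4 * pi)) at_top"
    unfolding err_def using L by (intro tendsto_intros t1 t2 t3) auto
  hence err0: "((\<lambda>R. err L \<mu> \<tau> R) \<longlongrightarrow> 0) at_top" by simp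
  have lim3: "((\<lambda>R. K_const \<tau> \<mu> L / L + err L \<mu> \<tau> R) \<longlongrightarrow> K_const \<tau> \<mu> L / L + 0) at_top"
    by (intro tendsto_intros err0)
  have ev: "eventually (\<lambda>R. \<bar>sum f (BR R) / L^2 - ln (\<mu> + \<tau>) / (4 * pi)\<bar> \<le> K_const \<tau> \<mu> L / L + err L \<mu> \<tau> R) at_top"
    using eventually_ge_at_top[of \<mu>]
  proof eventually_elim
    case (elim R)
    have "sum f (BR R) = (\<Sum>p\<in>{p. lattice_sq L p \<le> R}. 1 / (lattice_sq L p + 1)
            - (if \<mu> < lattice_sq L p then 1 / (lattice_sq L p + \<tau>) else 0))"
      unfolding f_def BR_def by simp
    with finite_R[OF L mu tau elim] show ?case by simp
  qed
  have "\<bar>S / L^2 - ln (\<mu> + \<tau>) / (4 * pi)\<bar> \<le> K_const \<tau> \<mu> L / L + 0"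
    by (rule tendsto_le[OF trivial_limit_at_top_linorder lim3 lim2 ev])
  thus ?thesis unfolding G by simp
qed

lemma scale_G:
  fixes E_B L \<mu> \<tau> :: real
  assumes EB: "E_B < 0" and L: "L > 0"
  shows "G_mu L E_B \<mu> \<tau> = G_mu (L * sqrt \<bar>E_B\<bar>) (-1) (\<mu> / \<bar>E_B\<bar>) (\<tau> / \<bar>E_B\<bar>)"
proof -
  define E where "E = \<bar>E_B\<bar>"
  have E: "E > 0" unfolding E_def using EB by simp
  have EBE: "E_B = - E" unfolding E_def using EB by simp
  define L' where "L' = L * sqrt E"
  have sE: "sqrt E ^ 2 = E" using E by simp
  have ls: "lattice_sq L p = E * lattice_sq L' p" for p
  proof -
    have "(2 * pi / L')^2 = (2 * pi / L)^2 / E"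
      unfolding L'_def by (simp add: power_divide power_mult_distrib sE)
    hence "E * (2 * pi / L')^2 = (2 * pi / L)^2" using E by simp
    thus ?thesis unfolding lattice_sq_def by (simp add: mult.assoc[symmetric])
  qed
  have pt: "1 / (lattice_sq L p - E_B) - (if \<mu> < lattice_sq L p then 1 / (lattice_sq L p + \<tau>) else 0)
      = (1 / E) * (1 / (lattice_sq L' p - -1) - (if \<mu> / E < lattice_sq L' p then 1 / (lattice_sq L' p + \<tau> / E) else 0))"
    for p
  proof -
    define q where "q = lattice_sq L' p"
    have c1: "\<mu> < E * q \<longleftrightarrow> \<mu> / E < q" using E by (simp add: pos_divide_less_eq mult.commute)
    have e1: "E * q - E_B = E * (q - -1)" unfolding EBE by (simp add: algebra_simps)
    have e2: "E * q + \<tau> = E * (q + \<tau> / E)" using E by (simp add: algebra_simps)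
    show ?thesis unfolding ls q_def[symmetric] e1 e2 c1 by (simp add: right_diff_distrib)
  qed
  have "G_mu L E_B \<mu> \<tau> = (1 / L^2) * (1 / E) *
      (\<Sum>\<^sub>\<infinity>p\<in>(UNIV :: (int \<times> int) set). 1 / (lattice_sq L' p - -1) - (if \<mu> / E < lattice_sq L' p then 1 / (lattice_sq L' p + \<tau> / E) else 0))"
    unfolding G_mu_def pt infsum_cmult_right' by simp
  also have "(1 / L^2) * (1 / E) = 1 / L'^2" unfolding L'_def using E by (simp add: power_mult_distrib)
  finally show ?thesis unfolding G_mu_def L'_def E_def by simp
qed

theorem lemma5p2:
  fixes E_B \<mu> \<tau> L :: real
  assumes "E_B < 0" and "\<mu> > 0" and "\<tau> > - \<mu>" and "L > 0"
  shows "\<bar>G_mu L E_B \<mu> \<tau> - (1 / (4 * pi)) * ln (\<mu> / \<bar>E_B\<bar> + \<tau> / \<bar>E_B\<bar>)\<bar>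
         \<le> K_const (\<tau> / \<bar>E_B\<bar>) (\<mu> / \<bar>E_B\<bar>) (L * sqrt \<bar>E_B\<bar>) / (L * sqrt \<bar>E_B\<bar>)"
proof -
  have E: "\<bar>E_B\<bar> > 0" using assms(1) by simp
  have L': "L * sqrt \<bar>E_B\<bar> > 0" using E assms(4) by simp
  have m': "\<mu> / \<bar>E_B\<bar> > 0" using E assms(2) by simp
  have t': "\<tau> / \<bar>E_B\<bar> > - (\<mu> / \<bar>E_B\<bar>)"
    using divide_strict_right_mono[OF assms(3) E] by simp
  show ?thesis unfolding scale_G[OF assms(1) assms(4)] by (rule main_E1[OF L' m' t'])
qed

end
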